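(* Every simple bipartite nonplanar cubic graph $B$ with at most $10$ vertices satisfies $K'(B,3)>1$.
   Context: A proper $3$-edge coloring assigns colors from $\{1,2,3\}$ to edges so that adjacent edges receive different colors. For colors $a\neq b$, an edge-Kempe chain is a connected component of the subgraph of edges colored $a$ or $b$; an edge-Kempe switch interchanges $a$ and $b$ on one chain. $K'(G,3)$ is the number of equivalence classes of proper $3$-edge colorings of $G$ under the equivalence relation generated by edge-Kempe switches. *)

theory Defs
  imports "HOL-Analysis.Analysis"
begin

definition simple_graph :: "'a set \<Rightarrow> 'a set set \<Rightarrow> bool" where
  "simple_graph V E \<longleftrightarrow> finite V \<and> (\<forall>e\<in>E. e \<subseteq> V \<and> card e = 2)"

definition cubic :: "'a set \<Rightarrow> 'a set set \<Rightarrow> bool" where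
  "cubic V E \<longleftrightarrow> (\<forall>v\<in>V. card {e\<in>E. v \<in> e} = 3)"

definition bipartite :: "'a set \<Rightarrow> 'a set set \<Rightarrow> bool" where
  "bipartite V E \<longleftrightarrow> (\<exists>X. X \<subseteq> V \<and> (\<forall>e\<in>E. card (e \<inter> X) = 1))"

definition planar :: "'a set \<Rightarrow> 'a set set \<Rightarrow> bool" where
  "planar V E \<longleftrightarrow> (\<exists>(p :: 'a \<Rightarrow> complex) (\<gamma> :: 'a set \<Rightarrow> real \<Rightarrow> complex).
     inj_on p V \<and>
     (\<forall>e\<in>E. arc (\<gamma> e) \<and> {pathstart (\<gamma> e), pathfinish (\<gamma> e)} = p ` e) \<and>
     (\<forall>e\<in>E. \<gamma> e ` {0<..<1} \<inter> p ` V = {}) \<and>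
     (\<forall>e\<in>E. \<forall>f\<in>E. e \<noteq> f \<longrightarrow> \<gamma> e ` {0<..<1} \<inter> \<gamma> f ` {0..1} = {}))"

definition edge_colorings3 :: "'a set set \<Rightarrow> ('a set \<Rightarrow> nat) set" where
  "edge_colorings3 E = {c. (\<forall>e\<in>E. c e \<in> {1,2,3}) \<and> (\<forall>e. e \<notin> E \<longrightarrow> c e = 0) \<and>
      (\<forall>e\<in>E. \<forall>f\<in>E. e \<noteq> f \<and> e \<inter> f \<noteq> {} \<longrightarrow> c e \<noteq> c f)}"

definition ab_edges :: "'a set set \<Rightarrow> ('a set \<Rightarrow> nat) \<Rightarrow> nat \<Rightarrow> nat \<Rightarrow> 'a set set" where
  "ab_edges E c a b = {e\<in>E. c e = a \<or> c e = b}"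

definition kempe_chain :: "'a set set \<Rightarrow> ('a set \<Rightarrow> nat) \<Rightarrow> nat \<Rightarrow> nat \<Rightarrow> 'a set \<Rightarrow> 'a set set" where
  "kempe_chain E c a b e0 =
     {f. (\<lambda>x y. x \<in> ab_edges E c a b \<and> y \<in> ab_edges E c a b \<and> x \<inter> y \<noteq> {})\<^sup>*\<^sup>* e0 f}"

definition swap_col :: "nat \<Rightarrow> nat \<Rightarrow> nat \<Rightarrow> nat" where
  "swap_col a b x = (if x = a then b else if x = b then a else x)"

definition kempe_switch ::
  "'a set set \<Rightarrow> ('a set \<Rightarrow> nat) \<Rightarrow> nat \<Rightarrow> nat \<Rightarrow> 'a set \<Rightarrow> ('a set \<Rightarrow> nat)" where
  "kempe_switch E c a b e0 =
     (\<lambda>e. if e \<in> kempe_chain E c a b e0 then swap_col a b (c e) else c e)"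

definition kempe_step :: "'a set set \<Rightarrow> ('a set \<Rightarrow> nat) \<Rightarrow> ('a set \<Rightarrow> nat) \<Rightarrow> bool" where
  "kempe_step E c d \<longleftrightarrow> c \<in> edge_colorings3 E \<and>
     (\<exists>a b e0. a \<in> {1,2,3} \<and> b \<in> {1,2,3} \<and> a \<noteq> b \<and> e0 \<in> ab_edges E c a b \<and>
        d = kempe_switch E c a b e0)"

definition kempe_rel :: "'a set set \<Rightarrow> (('a set \<Rightarrow> nat) \<times> ('a set \<Rightarrow> nat)) set" where
  "kempe_rel E = {(c, d). c \<in> edge_colorings3 E \<and> d \<in> edge_colorings3 E \<and>
                          equivclp (kempe_step E) c d}"

text \<open>K'(G,3): number of edge-Kempe equivalence classes of proper 3-edge colourings.\<close>
definition edge_kempe_classes3 :: "'a set set \<Rightarrow> nat" where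
  "edge_kempe_classes3 E = card (edge_colorings3 E // kempe_rel E)"

end

theory Submission
  imports Defs
begin

definition agree :: "'a set set \<Rightarrow> ('a set \<Rightarrow> nat) \<Rightarrow> ('a set \<Rightarrow> nat) \<Rightarrow> 'a \<Rightarrow> nat" where
  "agree E c d v = card {e\<in>E. v\<in>e \<and> c e = d e}"

definition oddset :: "'a set \<Rightarrow> 'a set set \<Rightarrow> ('a set \<Rightarrow> nat) \<Rightarrow> ('a set \<Rightarrow> nat) \<Rightarrow> 'a set" where
  "oddset V E c d = {v\<in>V. agree E c d v = 1}"

lemma finE: "simple_graph V E \<Longrightarrow> finite E"
  unfolding simple_graph_def by (meson PowI finite_Pow_iff finite_subset subsetI)

lemma colD:
  assumes "c \<in> edge_colorings3 E"
  shows "\<And>e. e\<in>E \<Longrightarrow> c e \<in> {1,2,3}" "\<And>e. e \<notin> E \<Longrightarrow> c e = 0"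
    "\<And>e f. e\<in>E \<Longrightarrow> f\<in>E \<Longrightarrow> e \<noteq> f \<Longrightarrow> e \<inter> f \<noteq> {} \<Longrightarrow> c e \<noteq> c f"
  using assms unfolding edge_colorings3_def by (simp_all add: Ball_def)

lemma col_unique:
  assumes sg: "simple_graph V E" and cu: "cubic V E" and c: "c \<in> edge_colorings3 E"
    and v: "v \<in> V" and k: "k \<in> {1,2,3}"
  shows "\<exists>!e. e\<in>E \<and> v\<in>e \<and> c e = k"
proof -
  define S where "S = {e\<in>E. v\<in>e}"
  have fin: "finite S" using finE[OF sg] unfolding S_def by simp
  have card: "card S = 3" using cu v unfolding cubic_def S_def by simp
  have inj: "inj_on c S"
  proof (rule inj_onI)
    fix e f assume "e \<in> S" "f \<in> S" "c e = c f"
    then show "e = f" using colD(3)[OF c, of e f] unfolding S_def by auto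
  qed
  have sub: "c ` S \<subseteq> {1,2,3}" using colD(1)[OF c] unfolding S_def by auto
  have "card (c ` S) = 3" using card_image[OF inj] card by simp
  hence eq: "c ` S = {1,2,3}"
    using sub by (intro card_subset_eq) simp_all
  then have "k \<in> c ` S" using k by simp
  then obtain e where e: "e \<in> S" "c e = k" by blast
  have "\<And>f. f \<in> S \<Longrightarrow> c f = k \<Longrightarrow> f = e"
    using inj e unfolding inj_on_def by metis
  then show ?thesis using e unfolding S_def by blast
qed

lemma chain_sub:
  assumes "e0 \<in> ab_edges E c a b"
  shows "kempe_chain E c a b e0 \<subseteq> ab_edges E c a b"
proof
  fix f assume "f \<in> kempe_chain E c a b e0"
  hence "(\<lambda>x y. x \<in> ab_edges E c a b \<and> y \<in> ab_edges E c a b \<and> x \<inter> y \<noteq> {})\<^sup>*\<^sup>* e0 f"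
    unfolding kempe_chain_def by simp
  then show "f \<in> ab_edges E c a b"
    by (induct rule: rtranclp_induct) (use assms in auto)
qed

lemma chain_ext:
  assumes "e0 \<in> ab_edges E c a b" "f \<in> kempe_chain E c a b e0" "g \<in> ab_edges E c a b" "f \<inter> g \<noteq> {}"
  shows "g \<in> kempe_chain E c a b e0"
proof -
  have "f \<in> ab_edges E c a b" using chain_sub assms by blast
  then show ?thesis using assms unfolding kempe_chain_def
    by (auto intro: rtranclp.rtrancl_into_rtrancl)
qed

lemma card3_filter:
  assumes "x \<noteq> y" "x \<noteq> z" "y \<noteq> z"
  shows "card {e\<in>{x,y,z}. P e} = of_bool (P x) + of_bool (P y) + of_bool (P z)"
proof -
  have "card {e\<in>{x,y,z}. P e} = (\<Sum>e\<in>{e\<in>{x,y,z}. P e}. (1::nat))" by simp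
  also have "\<dots> = (\<Sum>e\<in>{x,y,z}. if P e then 1 else 0)"
    by (rule sum.inter_filter) simp
  also have "\<dots> = of_bool (P x) + of_bool (P y) + of_bool (P z)"
    using assms by simp
  finally show ?thesis .
qed

lemma par_sym_diff:
  assumes "finite A" "finite T"
  shows "even (card ((A - T) \<union> (T - A))) = (even (card A) = even (card T))"
proof -
  have 1: "card ((A - T) \<union> (T - A)) = card (A - T) + card (T - A)"
    using assms by (intro card_Un_disjoint) auto
  have 2: "card A = card (A - T) + card (A \<inter> T)"
    using card_Int_Diff[OF assms(1), of T] by simp
  have 3: "card T = card (T - A) + card (A \<inter> T)"
    using card_Int_Diff[OF assms(2), of A] by (simp add: Int_commute)
  show ?thesis using 1 2 3 by presburger
qed

lemma col_ex:
  assumes sg: "simple_graph V E" and cu: "cubic V E" and c: "c \<in> edge_colorings3 E"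
    and v: "v \<in> V" and k: "k \<in> {1,2,3}"
  obtains e where "e\<in>E" "v\<in>e" "c e = k"
  using col_unique[OF assms] by blast

lemma col_uniq:
  assumes c: "c \<in> edge_colorings3 E" and "e\<in>E" "v\<in>e" "f\<in>E" "v\<in>f" "c e = c f"
  shows "e = f"
  using colD(3)[OF c, of e f] assms by blast

lemma local_toggle:
  assumes "a \<noteq> b" "a \<noteq> x" "b \<noteq> x" "{u,w,z} = {a,b,x}" "u \<noteq> w" "u \<noteq> z" "w \<noteq> z"
  shows "(of_bool (u = a) + of_bool (w = b) + of_bool (z = x) = (1::nat)) \<longleftrightarrow>
         \<not> (of_bool (u = b) + of_bool (w = a) + of_bool (z = x) = (1::nat))"
proof -
  have "u \<in> {a,b,x}" "w \<in> {a,b,x}" "z \<in> {a,b,x}" using assms(4) by blast+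
  then show ?thesis using assms(1-3,5-7) by auto
qed

lemma touched_struct:
  assumes sg: "simple_graph V E" and cu: "cubic V E" and c: "c \<in> edge_colorings3 E"
    and a: "a \<in> {1,2,3}" and b: "b \<in> {1,2,3}" and ab: "a \<noteq> b"
    and x: "x \<in> {1,2,3}" "x \<noteq> a" "x \<noteq> b"
    and e0: "e0 \<in> ab_edges E c a b"
    and v: "v \<in> V" and f: "f \<in> kempe_chain E c a b e0" "v \<in> f"
  shows "\<exists>ea eb ex. {e\<in>E. v\<in>e} = {ea,eb,ex} \<and> ea \<noteq> eb \<and> ea \<noteq> ex \<and> eb \<noteq> ex \<and>
      c ea = a \<and> c eb = b \<and> c ex = x \<and> ea \<in> kempe_chain E c a b e0 \<and> eb \<in> kempe_chain E c a b e0
      \<and> ex \<notin> kempe_chain E c a b e0 \<and> ea \<in> E \<and> eb \<in> E \<and> ex \<in> E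
      \<and> v \<in> ea \<and> v \<in> eb \<and> v \<in> ex"
proof -
  let ?K = "kempe_chain E c a b e0"
  have KE: "?K \<subseteq> ab_edges E c a b" using chain_sub[OF e0] by simp
  have crange: "\<And>e. e\<in>E \<Longrightarrow> c e \<in> {1,2,3}"
    using colD(1)[OF c] .
  obtain ea where ea: "ea \<in> E" "v \<in> ea" "c ea = a" using col_ex[OF sg cu c v a] by blast
  obtain eb where eb: "eb \<in> E" "v \<in> eb" "c eb = b" using col_ex[OF sg cu c v b] by blast
  obtain ex where ex: "ex \<in> E" "v \<in> ex" "c ex = x" using col_ex[OF sg cu c v x(1)] by blast
  have S: "{e\<in>E. v\<in>e} = {ea,eb,ex}"
  proof (rule set_eqI, rule iffI)
    fix e assume e: "e \<in> {e\<in>E. v\<in>e}"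
    then have eE: "e \<in> E" and ve: "v \<in> e" by auto
    have "c e \<in> {1,2,3}" using colD(1)[OF c eE] .
    moreover have "{1,2,3} = {a,b,x::nat}" using a b x ab by auto
    ultimately have "c e = a \<or> c e = b \<or> c e = x" by blast
    then show "e \<in> {ea,eb,ex}"
    proof (elim disjE)
      assume "c e = a" then have "e = ea" using col_uniq[OF c eE ve ea(1,2)] ea(3) by simp
      then show ?thesis by simp
    next
      assume "c e = b" then have "e = eb" using col_uniq[OF c eE ve eb(1,2)] eb(3) by simp
      then show ?thesis by simp
    next
      assume "c e = x" then have "e = ex" using col_uniq[OF c eE ve ex(1,2)] ex(3) by simp
      then show ?thesis by simp
    qed
  next
    fix e assume "e \<in> {ea,eb,ex}" then show "e \<in> {e\<in>E. v\<in>e}" using ea eb ex by auto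
  qed
  have eaK: "ea \<in> ?K"
    by (rule chain_ext[OF e0 f(1)]) (use f ea in \<open>auto simp: ab_edges_def\<close>)
  have ebK: "eb \<in> ?K"
    by (rule chain_ext[OF e0 f(1)]) (use f eb in \<open>auto simp: ab_edges_def\<close>)
  have exK: "ex \<notin> ?K" using KE ex x unfolding ab_edges_def by blast
  have d: "ea \<noteq> eb" "ea \<noteq> ex" "eb \<noteq> ex" using ea eb ex ab x by auto
  show ?thesis
    apply (rule exI[of _ ea], rule exI[of _ eb], rule exI[of _ ex])
    using S ea eb ex eaK ebK exK d by simp
qed

lemma step_par:
  assumes sg: "simple_graph V E" and cu: "cubic V E" and d0: "d0 \<in> edge_colorings3 E"
    and st: "kempe_step E c d"
  shows "even (card (oddset V E c d0)) = even (card (oddset V E d d0))"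
proof -
  have c: "c \<in> edge_colorings3 E" using st unfolding kempe_step_def by (rule conjunct1)
  have "\<exists>a b e0. a \<in> {1,2,3} \<and> b \<in> {1,2,3} \<and> a \<noteq> b \<and> e0 \<in> ab_edges E c a b \<and>
        d = kempe_switch E c a b e0" using st unfolding kempe_step_def by (rule conjunct2)
  then obtain a b e0 where a: "a \<in> {1,2,3}" and b: "b \<in> {1,2,3}"
    and ab: "a \<noteq> b" and e0: "e0 \<in> ab_edges E c a b" and d: "d = kempe_switch E c a b e0"
    by (elim exE conjE)
  define K where "K = kempe_chain E c a b e0"
  have KE: "K \<subseteq> ab_edges E c a b" using chain_sub[OF e0] K_def by simp
  have finE': "finite E" using finE[OF sg] .
  have Esub: "\<And>e. e \<in> E \<Longrightarrow> e \<subseteq> V" using sg unfolding simple_graph_def by blast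
  define T where "T = {v\<in>V. \<exists>f\<in>K. v\<in>f}"
  define x where "x = 6 - a - b"
  have x: "x \<in> {1,2,3}" "x \<noteq> a" "x \<noteq> b" using a b ab unfolding x_def by auto
  have d_eq: "\<And>e. d e = (if e \<in> K then swap_col a b (c e) else c e)"
    unfolding d kempe_switch_def K_def by simp
  have touched: "\<exists>ea eb ex. {e\<in>E. v\<in>e} = {ea,eb,ex} \<and> ea \<noteq> eb \<and> ea \<noteq> ex \<and> eb \<noteq> ex \<and>
      c ea = a \<and> c eb = b \<and> c ex = x \<and> ea \<in> K \<and> eb \<in> K \<and> ex \<notin> K \<and> ea \<in> E \<and> eb \<in> E \<and> ex \<in> E
      \<and> v \<in> ea \<and> v \<in> eb \<and> v \<in> ex"
    if vT: "v \<in> T" for v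
  proof -
    from vT obtain f where v: "v \<in> V" and f: "f \<in> K" "v \<in> f" unfolding T_def by blast
    show ?thesis using touched_struct[OF sg cu c a b ab x e0 v f[unfolded K_def]] unfolding K_def .
  qed
  have untouched: "agree E d d0 v = agree E c d0 v" if v: "v \<in> V" "v \<notin> T" for v
  proof -
    have "{e\<in>E. v\<in>e \<and> d e = d0 e} = {e\<in>E. v\<in>e \<and> c e = d0 e}"
      using v unfolding T_def by (auto simp: d_eq)
    then show ?thesis unfolding agree_def by simp
  qed
  have toggle: "(agree E d d0 v = 1) \<longleftrightarrow> \<not> (agree E c d0 v = 1)" if vT: "v \<in> T" for v
  proof -
    obtain ea eb ex where H: "{e\<in>E. v\<in>e} = {ea,eb,ex}" "ea \<noteq> eb" "ea \<noteq> ex" "eb \<noteq> ex"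
      "c ea = a" "c eb = b" "c ex = x" "ea \<in> K" "eb \<in> K" "ex \<notin> K" "ea \<in> E" "eb \<in> E" "ex \<in> E"
      "v \<in> ea" "v \<in> eb" "v \<in> ex"
      using touched[OF vT] by blast
    have s1: "{e\<in>E. v\<in>e \<and> c e = d0 e} = {e\<in>{ea,eb,ex}. c e = d0 e}" using H(1) by blast
    have s2: "{e\<in>E. v\<in>e \<and> d e = d0 e} = {e\<in>{ea,eb,ex}. d e = d0 e}" using H(1) by blast
    have dv: "d ea = b" "d eb = a" "d ex = x" using H(5-10) ab by (auto simp: d_eq swap_col_def)
    have ag1: "agree E c d0 v = of_bool (a = d0 ea) + of_bool (b = d0 eb) + of_bool (x = d0 ex)"
      unfolding agree_def s1 using card3_filter[OF H(2-4)] H(5-7) by simp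
    have ag2: "agree E d d0 v = of_bool (b = d0 ea) + of_bool (a = d0 eb) + of_bool (x = d0 ex)"
      unfolding agree_def s2 using card3_filter[OF H(2-4)] dv by simp
    have dist: "d0 ea \<noteq> d0 eb" "d0 ea \<noteq> d0 ex" "d0 eb \<noteq> d0 ex"
      using colD(3)[OF d0, of ea eb] colD(3)[OF d0, of ea ex] colD(3)[OF d0, of eb ex] H(2-4,11-16)
      by blast+
    have rng: "d0 ea \<in> {1,2,3}" "d0 eb \<in> {1,2,3}" "d0 ex \<in> {1,2,3}"
      using colD(1)[OF d0] H(11-13) by auto
    have "{d0 ea, d0 eb, d0 ex} = {a,b,x}"
    proof -
      have "{a,b,x} = {1,2,3::nat}" using a b x ab by auto
      moreover have "{d0 ea, d0 eb, d0 ex} = {1,2,3::nat}"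
        using rng dist by (intro card_subset_eq[symmetric]) (auto simp: card_insert_if)
      ultimately show ?thesis by simp
    qed
    from local_toggle[OF ab x(2)[symmetric] x(3)[symmetric] this dist]
    show ?thesis unfolding ag1 ag2 by (simp add: eq_commute)
  qed
  have Teven: "even (card T)"
  proof -
    define Ka where "Ka = {e\<in>K. c e = a}"
    have KaE: "Ka \<subseteq> E" using KE unfolding Ka_def ab_edges_def by auto
    have TU: "T = \<Union>Ka"
    proof
      show "T \<subseteq> \<Union>Ka"
      proof
        fix v assume "v \<in> T"
        from touched[OF this] obtain ea where "ea \<in> K" "c ea = a" "v \<in> ea" by blast
        then show "v \<in> \<Union>Ka" unfolding Ka_def by blast
      qed
      show "\<Union>Ka \<subseteq> T"
      proof
        fix v assume "v \<in> \<Union>Ka"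
        then obtain e where "e \<in> Ka" "v \<in> e" by blast
        then show "v \<in> T" using KaE Esub unfolding T_def Ka_def by blast
      qed
    qed
    have pw: "pairwise disjnt Ka"
    proof (rule pairwiseI)
      fix e f assume "e \<in> Ka" "f \<in> Ka" "e \<noteq> f"
      then show "disjnt e f" using colD(3)[OF c, of e f] KaE unfolding Ka_def disjnt_def by auto
    qed
    have finKa: "finite Ka" using KaE finE' finite_subset by blast
    have c2: "\<And>e. e \<in> Ka \<Longrightarrow> card e = 2" using KaE sg unfolding simple_graph_def by blast
    have fin2: "\<And>e. e \<in> Ka \<Longrightarrow> finite e" using c2 card.infinite by fastforce
    have "card T = sum card Ka" unfolding TU by (rule card_Union_disjoint[OF pw fin2])
    also have "\<dots> = 2 * card Ka" using c2 by simp
    finally show ?thesis by simp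
  qed
  have TV: "T \<subseteq> V" unfolding T_def by blast
  have finV: "finite V" using sg unfolding simple_graph_def by blast
  have odd_eq: "oddset V E d d0 = (oddset V E c d0 - T) \<union> (T - oddset V E c d0)"
  proof (rule set_eqI)
    fix v show "v \<in> oddset V E d d0 \<longleftrightarrow> v \<in> (oddset V E c d0 - T) \<union> (T - oddset V E c d0)"
    proof (cases "v \<in> T")
      case True
      then show ?thesis using toggle[OF True] TV unfolding oddset_def by auto
    next
      case False
      then show ?thesis using untouched[OF _ False] unfolding oddset_def by auto
    qed
  qed
  have f1: "finite (oddset V E c d0)" using finV unfolding oddset_def by simp
  have f2: "finite T" using finV TV finite_subset by blast
  show ?thesis
    unfolding odd_eq using par_sym_diff[OF f1 f2] Teven by simp
qed

lemma equiv_par: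
  assumes sg: "simple_graph V E" and cu: "cubic V E" and d0: "d0 \<in> edge_colorings3 E"
    and eq: "equivclp (kempe_step E) c d"
  shows "even (card (oddset V E c d0)) = even (card (oddset V E d d0))"
  using eq unfolding equivclp_def
proof (induct rule: rtranclp_induct)
  case base then show ?case by simp
next
  case (step y z)
  from step(2) have "kempe_step E y z \<or> kempe_step E z y" unfolding symclp_def by simp
  then have "even (card (oddset V E y d0)) = even (card (oddset V E z d0))"
    using step_par[OF sg cu d0] by metis
  then show ?case using step(3) by simp
qed

lemma colorings_finite:
  assumes "finite E"
  shows "finite (edge_colorings3 E)"
proof -
  have inj: "inj_on (\<lambda>c. restrict c E) (edge_colorings3 E)"
  proof (rule inj_onI)
    fix c d assume c: "c \<in> edge_colorings3 E" and d: "d \<in> edge_colorings3 E"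
      and eq: "restrict c E = restrict d E"
    show "c = d"
    proof
      fix e show "c e = d e"
      proof (cases "e \<in> E")
        case True then show ?thesis using fun_cong[OF eq, of e] by simp
      next
        case False then show ?thesis using colD(2)[OF c False] colD(2)[OF d False] by simp
      qed
    qed
  qed
  have sub: "(\<lambda>c. restrict c E) ` edge_colorings3 E \<subseteq> PiE E (\<lambda>_. {1,2,3})"
  proof
    fix g assume "g \<in> (\<lambda>c. restrict c E) ` edge_colorings3 E"
    then obtain c where c: "c \<in> edge_colorings3 E" and g: "g = restrict c E" by blast
    show "g \<in> PiE E (\<lambda>_. {1,2,3})" unfolding g using colD(1)[OF c] by auto
  qed
  have "finite (PiE E (\<lambda>_. {1,2,3::nat}))" using assms by (intro finite_PiE) auto
  then have "finite ((\<lambda>c. restrict c E) ` edge_colorings3 E)" using sub finite_subset by blast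
  then show ?thesis using finite_imageD[OF _ inj] by blast
qed

lemma oddset_self:
  assumes sg: "simple_graph V E" and cu: "cubic V E"
  shows "oddset V E c c = {}"
proof -
  have "\<And>v. v \<in> V \<Longrightarrow> agree E c c v = 3" using cu unfolding agree_def cubic_def by simp
  then show ?thesis unfolding oddset_def by auto
qed

lemma two_classes:
  assumes sg: "simple_graph V E" and cu: "cubic V E"
    and c1: "c1 \<in> edge_colorings3 E" and c2: "c2 \<in> edge_colorings3 E"
    and od: "odd (card (oddset V E c2 c1))"
  shows "edge_kempe_classes3 E > 1"
proof -
  let ?C = "edge_colorings3 E" and ?R = "kempe_rel E"
  have fin: "finite ?C" using colorings_finite[OF finE[OF sg]] .
  have finQ: "finite (?C // ?R)" unfolding quotient_def using fin by simp
  have Q1: "?R `` {c1} \<in> ?C // ?R" using c1 by (rule quotientI)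
  have Q2: "?R `` {c2} \<in> ?C // ?R" using c2 by (rule quotientI)
  have "c1 \<in> ?R `` {c1}" using c1 unfolding kempe_rel_def by simp
  moreover have "c1 \<notin> ?R `` {c2}"
  proof
    assume "c1 \<in> ?R `` {c2}"
    then have "equivclp (kempe_step E) c2 c1" unfolding kempe_rel_def by simp
    from equiv_par[OF sg cu c1 this] have "even (card (oddset V E c2 c1)) = even (card (oddset V E c1 c1))" .
    then show False using od oddset_self[OF sg cu] by simp
  qed
  ultimately have ne: "?R `` {c1} \<noteq> ?R `` {c2}" by blast
  have "card {?R `` {c1}, ?R `` {c2}} \<le> card (?C // ?R)"
    using Q1 Q2 finQ by (intro card_mono) auto
  then show ?thesis using ne unfolding edge_kempe_classes3_def by simp
qed

definition realizes :: "'a set \<Rightarrow> 'a set set \<Rightarrow> nat \<Rightarrow> (nat \<Rightarrow> 'a) \<Rightarrow> (nat \<Rightarrow> 'a) \<Rightarrow> (nat \<Rightarrow> nat \<Rightarrow> bool) \<Rightarrow> bool" where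
  "realizes V E n gx gy M \<longleftrightarrow> inj_on gx {..<n} \<and> inj_on gy {..<n} \<and> gx ` {..<n} \<inter> gy ` {..<n} = {} \<and>
     V = gx ` {..<n} \<union> gy ` {..<n} \<and> E = {{gx i, gy j} | i j. i < n \<and> j < n \<and> M i j}"

definition table_ok :: "nat \<Rightarrow> (nat \<Rightarrow> nat \<Rightarrow> bool) \<Rightarrow> (nat \<Rightarrow> nat \<Rightarrow> nat) \<Rightarrow> bool" where
  "table_ok n M L \<longleftrightarrow> (\<forall>i<n. \<forall>j<n. M i j \<longrightarrow> L i j \<in> {1,2,3}) \<and>
     (\<forall>i<n. \<forall>j<n. \<forall>l<n. M i j \<longrightarrow> M i l \<longrightarrow> j \<noteq> l \<longrightarrow> L i j \<noteq> L i l) \<and>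
     (\<forall>i<n. \<forall>k<n. \<forall>j<n. M i j \<longrightarrow> M k j \<longrightarrow> i \<noteq> k \<longrightarrow> L i j \<noteq> L k j)"

definition tcount :: "nat \<Rightarrow> (nat \<Rightarrow> nat \<Rightarrow> bool) \<Rightarrow> (nat \<Rightarrow> nat \<Rightarrow> nat) \<Rightarrow> (nat \<Rightarrow> nat \<Rightarrow> nat) \<Rightarrow> nat" where
  "tcount n M L1 L2 = card {i. i < n \<and> card {j. j < n \<and> M i j \<and> L1 i j = L2 i j} = 1}
     + card {j. j < n \<and> card {i. i < n \<and> M i j \<and> L1 i j = L2 i j} = 1}"

definition tcol :: "'a set set \<Rightarrow> nat \<Rightarrow> (nat \<Rightarrow> 'a) \<Rightarrow> (nat \<Rightarrow> 'a) \<Rightarrow> (nat \<Rightarrow> nat \<Rightarrow> nat) \<Rightarrow> 'a set \<Rightarrow> nat" where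
  "tcol E n gx gy L e = (if e \<in> E then L (THE i. i < n \<and> gx i \<in> e) (THE j. j < n \<and> gy j \<in> e) else 0)"

lemma realizesD:
  assumes "realizes V E n gx gy M"
  shows "inj_on gx {..<n}" "inj_on gy {..<n}" "gx ` {..<n} \<inter> gy ` {..<n} = {}"
    "V = gx ` {..<n} \<union> gy ` {..<n}" "E = {{gx i, gy j} | i j. i < n \<and> j < n \<and> M i j}"
proof -
  note h = assms[unfolded realizes_def]
  show "inj_on gx {..<n}" using h by (elim conjE)
  show "inj_on gy {..<n}" using h by (elim conjE)
  show "gx ` {..<n} \<inter> gy ` {..<n} = {}" using h by (elim conjE)
  show "V = gx ` {..<n} \<union> gy ` {..<n}" using h by (elim conjE)
  show "E = {{gx i, gy j} | i j. i < n \<and> j < n \<and> M i j}" using h by (elim conjE)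
qed

lemma realizes_idx:
  assumes r: "realizes V E n gx gy M" and ij: "i < n" "j < n"
  shows "(THE k. k < n \<and> gx k \<in> {gx i, gy j}) = i" "(THE k. k < n \<and> gy k \<in> {gx i, gy j}) = j"
proof -
  note ix = realizesD(1)[OF r] and iy = realizesD(2)[OF r] and dj = realizesD(3)[OF r]
  show "(THE k. k < n \<and> gx k \<in> {gx i, gy j}) = i"
  proof (rule the_equality)
    show "i < n \<and> gx i \<in> {gx i, gy j}" using ij by simp
    fix k assume k: "k < n \<and> gx k \<in> {gx i, gy j}"
    then have "gx k = gx i \<or> gx k = gy j" by simp
    moreover have "gx k \<noteq> gy j" using dj k ij by blast
    ultimately have "gx k = gx i" by simp
    then show "k = i" using ix k ij unfolding inj_on_def by simp
  qed
  show "(THE k. k < n \<and> gy k \<in> {gx i, gy j}) = j"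
  proof (rule the_equality)
    show "j < n \<and> gy j \<in> {gx i, gy j}" using ij by simp
    fix k assume k: "k < n \<and> gy k \<in> {gx i, gy j}"
    then have "gy k = gx i \<or> gy k = gy j" by simp
    moreover have "gy k \<noteq> gx i" using dj k ij by blast
    ultimately have "gy k = gy j" by simp
    then show "k = j" using iy k ij unfolding inj_on_def by simp
  qed
qed

lemma tcol_val:
  assumes r: "realizes V E n gx gy M" and ij: "i < n" "j < n" "M i j"
  shows "tcol E n gx gy L {gx i, gy j} = L i j"
proof -
  have "{gx i, gy j} \<in> E" unfolding realizesD(5)[OF r] using ij by blast
  then show ?thesis unfolding tcol_def using realizes_idx[OF r ij(1,2)] by simp
qed

lemma realizes_edgeE:
  assumes r: "realizes V E n gx gy M" and e: "e \<in> E"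
  obtains i j where "i < n" "j < n" "M i j" "e = {gx i, gy j}"
  using e unfolding realizesD(5)[OF r] by blast

lemma realizes_ne:
  assumes r: "realizes V E n gx gy M" and "i < n" "j < n"
  shows "gx i \<noteq> gy j"
  using realizesD(3)[OF r] assms by blast

lemma realizes_gx_eq:
  assumes r: "realizes V E n gx gy M" and "i < n" "k < n"
  shows "gx i = gx k \<longleftrightarrow> i = k"
  using realizesD(1)[OF r] assms unfolding inj_on_def by blast

lemma realizes_gy_eq:
  assumes r: "realizes V E n gx gy M" and "i < n" "k < n"
  shows "gy i = gy k \<longleftrightarrow> i = k"
  using realizesD(2)[OF r] assms unfolding inj_on_def by blast

lemma pair_eq:
  assumes r: "realizes V E n gx gy M" and "i < n" "j < n" "k < n" "l < n"
  shows "{gx i, gy j} = {gx k, gy l} \<longleftrightarrow> i = k \<and> j = l"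
proof -
  have "gx i \<noteq> gy l" "gx k \<noteq> gy j" using realizes_ne[OF r] assms by auto
  then show ?thesis using realizes_gx_eq[OF r, of i k] realizes_gy_eq[OF r, of j l] assms
    by (auto simp: doubleton_eq_iff)
qed

lemma pair_int:
  assumes r: "realizes V E n gx gy M" and "i < n" "j < n" "k < n" "l < n"
  shows "{gx i, gy j} \<inter> {gx k, gy l} \<noteq> {} \<longleftrightarrow> i = k \<or> j = l"
proof -
  have "gx i \<noteq> gy l" "gx k \<noteq> gy j" using realizes_ne[OF r] assms by auto
  then show ?thesis using realizes_gx_eq[OF r, of i k] realizes_gy_eq[OF r, of j l] assms
    by auto
qed

lemma tcol_coloring:
  assumes r: "realizes V E n gx gy M" and t: "table_ok n M L"
  shows "tcol E n gx gy L \<in> edge_colorings3 E"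
proof -
  let ?c = "tcol E n gx gy L"
  have t1: "\<And>i j. i<n \<Longrightarrow> j<n \<Longrightarrow> M i j \<Longrightarrow> L i j \<in> {1,2,3}" using t unfolding table_ok_def by blast
  have t2: "\<And>i j l. i<n \<Longrightarrow> j<n \<Longrightarrow> l<n \<Longrightarrow> M i j \<Longrightarrow> M i l \<Longrightarrow> j \<noteq> l \<Longrightarrow> L i j \<noteq> L i l"
    using t unfolding table_ok_def by blast
  have t3: "\<And>i k j. i<n \<Longrightarrow> k<n \<Longrightarrow> j<n \<Longrightarrow> M i j \<Longrightarrow> M k j \<Longrightarrow> i \<noteq> k \<Longrightarrow> L i j \<noteq> L k j"
    using t unfolding table_ok_def by blast
  have A: "\<forall>e\<in>E. ?c e \<in> {1,2,3}"
  proof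
    fix e assume "e \<in> E"
    then obtain i j where "i < n" "j < n" "M i j" "e = {gx i, gy j}" by (rule realizes_edgeE[OF r])
    then show "?c e \<in> {1,2,3}" using tcol_val[OF r] t1 by simp
  qed
  have B: "\<forall>e. e \<notin> E \<longrightarrow> ?c e = 0" unfolding tcol_def by simp
  have C: "\<forall>e\<in>E. \<forall>f\<in>E. e \<noteq> f \<and> e \<inter> f \<noteq> {} \<longrightarrow> ?c e \<noteq> ?c f"
  proof (intro ballI impI)
    fix e f assume "e \<in> E" "f \<in> E" and ef: "e \<noteq> f \<and> e \<inter> f \<noteq> {}"
    obtain i j where ij: "i < n" "j < n" "M i j" "e = {gx i, gy j}" by (rule realizes_edgeE[OF r \<open>e \<in> E\<close>])
    obtain k l where kl: "k < n" "l < n" "M k l" "f = {gx k, gy l}" by (rule realizes_edgeE[OF r \<open>f \<in> E\<close>])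
    have "\<not> (i = k \<and> j = l)" using ef pair_eq[OF r ij(1,2) kl(1,2)] ij kl by simp
    moreover have "i = k \<or> j = l" using ef pair_int[OF r ij(1,2) kl(1,2)] ij kl by simp
    ultimately have "L i j \<noteq> L k l" using t2[OF ij(1,2) kl(2) ij(3)] t3[OF ij(1) kl(1) ij(2) ij(3)] kl ij
      by auto
    then show "?c e \<noteq> ?c f" using tcol_val[OF r] ij kl by simp
  qed
  show ?thesis unfolding edge_colorings3_def mem_Collect_eq using A B C by (intro conjI)
qed

lemma agree_gx:
  assumes r: "realizes V E n gx gy M" and i: "i < n"
  shows "agree E (tcol E n gx gy L1) (tcol E n gx gy L2) (gx i) = card {j. j < n \<and> M i j \<and> L1 i j = L2 i j}"
proof -
  let ?c1 = "tcol E n gx gy L1" and ?c2 = "tcol E n gx gy L2"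
  have eq: "{e\<in>E. gx i \<in> e \<and> ?c1 e = ?c2 e} = (\<lambda>j. {gx i, gy j}) ` {j. j < n \<and> M i j \<and> L1 i j = L2 i j}"
  proof (rule set_eqI, rule iffI)
    fix e assume "e \<in> {e\<in>E. gx i \<in> e \<and> ?c1 e = ?c2 e}"
    then have eE: "e \<in> E" and ge: "gx i \<in> e" and ce: "?c1 e = ?c2 e" by auto
    obtain k l where kl: "k < n" "l < n" "M k l" "e = {gx k, gy l}" by (rule realizes_edgeE[OF r eE])
    have "gx i \<noteq> gy l" using realizes_ne[OF r i kl(2)] .
    then have "gx i = gx k" using ge kl(4) by simp
    then have "i = k" using realizes_gx_eq[OF r i kl(1)] by simp
    then show "e \<in> (\<lambda>j. {gx i, gy j}) ` {j. j < n \<and> M i j \<and> L1 i j = L2 i j}"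
      using kl ce tcol_val[OF r] by auto
  next
    fix e assume "e \<in> (\<lambda>j. {gx i, gy j}) ` {j. j < n \<and> M i j \<and> L1 i j = L2 i j}"
    then obtain j where j: "j < n" "M i j" "L1 i j = L2 i j" "e = {gx i, gy j}" by blast
    have "e \<in> E" unfolding realizesD(5)[OF r] using i j by blast
    then show "e \<in> {e\<in>E. gx i \<in> e \<and> ?c1 e = ?c2 e}" using j tcol_val[OF r i] by simp
  qed
  have inj: "inj_on (\<lambda>j. {gx i, gy j}) {j. j < n \<and> M i j \<and> L1 i j = L2 i j}"
    by (rule inj_onI) (use pair_eq[OF r] i in auto)
  show ?thesis unfolding agree_def eq using card_image[OF inj] .
qed

lemma agree_gy:
  assumes r: "realizes V E n gx gy M" and j: "j < n"
  shows "agree E (tcol E n gx gy L1) (tcol E n gx gy L2) (gy j) = card {i. i < n \<and> M i j \<and> L1 i j = L2 i j}"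
proof -
  let ?c1 = "tcol E n gx gy L1" and ?c2 = "tcol E n gx gy L2"
  have eq: "{e\<in>E. gy j \<in> e \<and> ?c1 e = ?c2 e} = (\<lambda>i. {gx i, gy j}) ` {i. i < n \<and> M i j \<and> L1 i j = L2 i j}"
  proof (rule set_eqI, rule iffI)
    fix e assume "e \<in> {e\<in>E. gy j \<in> e \<and> ?c1 e = ?c2 e}"
    then have eE: "e \<in> E" and ge: "gy j \<in> e" and ce: "?c1 e = ?c2 e" by auto
    obtain k l where kl: "k < n" "l < n" "M k l" "e = {gx k, gy l}" by (rule realizes_edgeE[OF r eE])
    have "gx k \<noteq> gy j" using realizes_ne[OF r kl(1) j] .
    then have "gy j = gy l" using ge kl(4) by auto
    then have "j = l" using realizes_gy_eq[OF r j kl(2)] by simp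
    then show "e \<in> (\<lambda>i. {gx i, gy j}) ` {i. i < n \<and> M i j \<and> L1 i j = L2 i j}"
      using kl ce tcol_val[OF r] by auto
  next
    fix e assume "e \<in> (\<lambda>i. {gx i, gy j}) ` {i. i < n \<and> M i j \<and> L1 i j = L2 i j}"
    then obtain i where i: "i < n" "M i j" "L1 i j = L2 i j" "e = {gx i, gy j}" by blast
    have "e \<in> E" unfolding realizesD(5)[OF r] using i j by blast
    then show "e \<in> {e\<in>E. gy j \<in> e \<and> ?c1 e = ?c2 e}" using i tcol_val[OF r i(1) j] by simp
  qed
  have inj: "inj_on (\<lambda>i. {gx i, gy j}) {i. i < n \<and> M i j \<and> L1 i j = L2 i j}"
    by (rule inj_onI) (use pair_eq[OF r] j in auto)
  show ?thesis unfolding agree_def eq using card_image[OF inj] .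
qed

lemma oddset_card:
  assumes r: "realizes V E n gx gy M"
  shows "card (oddset V E (tcol E n gx gy L1) (tcol E n gx gy L2)) = tcount n M L1 L2"
proof -
  let ?c1 = "tcol E n gx gy L1" and ?c2 = "tcol E n gx gy L2"
  define A where "A = {i. i < n \<and> card {j. j < n \<and> M i j \<and> L1 i j = L2 i j} = 1}"
  define B where "B = {j. j < n \<and> card {i. i < n \<and> M i j \<and> L1 i j = L2 i j} = 1}"
  have eq: "oddset V E ?c1 ?c2 = gx ` A \<union> gy ` B"
  proof (rule set_eqI, rule iffI)
    fix v assume "v \<in> oddset V E ?c1 ?c2"
    then have vV: "v \<in> V" and av: "agree E ?c1 ?c2 v = 1" unfolding oddset_def by auto
    from vV have "v \<in> gx ` {..<n} \<or> v \<in> gy ` {..<n}" unfolding realizesD(4)[OF r] by blast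
    then show "v \<in> gx ` A \<union> gy ` B"
    proof
      assume "v \<in> gx ` {..<n}" then obtain i where i: "i < n" "v = gx i" by blast
      then show ?thesis using av agree_gx[OF r i(1)] unfolding A_def by auto
    next
      assume "v \<in> gy ` {..<n}" then obtain j where j: "j < n" "v = gy j" by blast
      then show ?thesis using av agree_gy[OF r j(1)] unfolding B_def by auto
    qed
  next
    fix v assume "v \<in> gx ` A \<union> gy ` B"
    then show "v \<in> oddset V E ?c1 ?c2"
    proof
      assume "v \<in> gx ` A" then obtain i where i: "i \<in> A" "v = gx i" by blast
      then have "i < n" unfolding A_def by simp
      then show ?thesis using i agree_gx[OF r] unfolding A_def oddset_def realizesD(4)[OF r] by auto
    next
      assume "v \<in> gy ` B" then obtain j where j: "j \<in> B" "v = gy j" by blast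
      then have "j < n" unfolding B_def by simp
      then show ?thesis using j agree_gy[OF r] unfolding B_def oddset_def realizesD(4)[OF r] by auto
    qed
  qed
  have A: "A \<subseteq> {..<n}" "B \<subseteq> {..<n}" unfolding A_def B_def by auto
  have injA: "inj_on gx A" using inj_on_subset[OF realizesD(1)[OF r] A(1)] .
  have injB: "inj_on gy B" using inj_on_subset[OF realizesD(2)[OF r] A(2)] .
  have dj: "gx ` A \<inter> gy ` B = {}" using realizesD(3)[OF r] A by blast
  have fin: "finite A" "finite B" using A finite_subset by auto
  have "card (gx ` A \<union> gy ` B) = card A + card B"
    using card_Un_disjoint[of "gx ` A" "gy ` B"] fin dj card_image[OF injA] card_image[OF injB] by simp
  then show ?thesis unfolding eq tcount_def A_def B_def by simp
qed

lemma realize_two: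
  assumes sg: "simple_graph V E" and cu: "cubic V E" and r: "realizes V E n gx gy M"
    and t1: "table_ok n M L1" and t2: "table_ok n M L2" and od: "odd (tcount n M L2 L1)"
  shows "edge_kempe_classes3 E > 1"
  using two_classes[OF sg cu tcol_coloring[OF r t1] tcol_coloring[OF r t2]] oddset_card[OF r] od by simp

lemma card_lt_filter: "card {j. j < n \<and> P j} = length (filter P [0..<n])"
proof -
  have "{j. j < n \<and> P j} = set (filter P [0..<n])" by auto
  then show ?thesis using distinct_card[of "filter P [0..<n]"] by simp
qed

lemma all_lt3: "(\<forall>i<(3::nat). P i) \<longleftrightarrow> P 0 \<and> P 1 \<and> P 2"
  by (auto simp: less_Suc_eq numeral_eq_Suc)
lemma all_lt5: "(\<forall>i<(5::nat). P i) \<longleftrightarrow> P 0 \<and> P 1 \<and> P 2 \<and> P 3 \<and> P 4"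
  by (auto simp: less_Suc_eq numeral_eq_Suc)
lemma upt3: "[0..<3] = [0,1,2::nat]" by (simp add: upt_rec)
lemma upt5: "[0..<5] = [0,1,2,3,4::nat]" by (simp add: upt_rec)

definition K33L1 :: "nat \<Rightarrow> nat \<Rightarrow> nat" where "K33L1 i j = [[1,2,3],[2,3,1],[3,1,2::nat]] ! i ! j"
definition K33L2 :: "nat \<Rightarrow> nat \<Rightarrow> nat" where "K33L2 i j = [[1,2,3],[3,1,2],[2,3,1::nat]] ! i ! j"

lemma K33_ok1: "table_ok 3 (\<lambda>_ _. True) K33L1"
  unfolding table_ok_def all_lt3 K33L1_def by simp
lemma K33_ok2: "table_ok 3 (\<lambda>_ _. True) K33L2"
  unfolding table_ok_def all_lt3 K33L2_def by simp
lemma K33_odd: "odd (tcount 3 (\<lambda>_ _. True) K33L2 K33L1)"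
  unfolding tcount_def card_lt_filter upt3 K33L1_def K33L2_def by simp

definition M1 :: "nat \<Rightarrow> nat \<Rightarrow> bool" where "M1 i j = (j \<noteq> i \<and> j \<noteq> (i+1) mod 5)"
definition G1L1 :: "nat \<Rightarrow> nat \<Rightarrow> nat" where
  "G1L1 i j = [[0,0,1,2,3],[1,0,0,3,2],[2,3,0,0,1],[3,1,2,0,0],[0,2,3,1,0::nat]] ! i ! j"
definition G1L2 :: "nat \<Rightarrow> nat \<Rightarrow> nat" where
  "G1L2 i j = [[0,0,1,2,3],[3,0,0,1,2],[2,3,0,0,1],[1,2,3,0,0],[0,1,2,3,0::nat]] ! i ! j"
lemma G1_ok1: "table_ok 5 M1 G1L1"
  unfolding table_ok_def all_lt5 G1L1_def M1_def by simp
lemma G1_ok2: "table_ok 5 M1 G1L2"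
  unfolding table_ok_def all_lt5 G1L2_def M1_def by simp
lemma G1_odd: "odd (tcount 5 M1 G1L2 G1L1)"
  unfolding tcount_def card_lt_filter upt5 G1L1_def G1L2_def M1_def by simp

definition M2 :: "nat \<Rightarrow> nat \<Rightarrow> bool" where
  "M2 i j = ([[False,False,True,True,True],[False,False,True,True,True],[True,True,False,False,True],
              [True,True,True,False,False],[True,True,False,True,False]] ! i ! j)"
definition G2L1 :: "nat \<Rightarrow> nat \<Rightarrow> nat" where
  "G2L1 i j = [[0,0,1,2,3],[0,0,2,3,1],[1,3,0,0,2],[2,1,3,0,0],[3,2,0,1,0::nat]] ! i ! j"
definition G2L2 :: "nat \<Rightarrow> nat \<Rightarrow> nat" where
  "G2L2 i j = [[0,0,1,2,3],[0,0,2,3,1],[3,1,0,0,2],[1,2,3,0,0],[2,3,0,1,0::nat]] ! i ! j"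
lemma G2_ok1: "table_ok 5 M2 G2L1"
  unfolding table_ok_def all_lt5 G2L1_def M2_def by simp
lemma G2_ok2: "table_ok 5 M2 G2L2"
  unfolding table_ok_def all_lt5 G2L2_def M2_def by simp
lemma G2_odd: "odd (tcount 5 M2 G2L2 G2L1)"
  unfolding tcount_def card_lt_filter upt5 G2L1_def G2L2_def M2_def by simp

lemma card_compl_filter:
  assumes "finite Y"
  shows "card {y\<in>Y. \<not> P y} = card Y - card {y\<in>Y. P y}"
proof -
  have "{y\<in>Y. \<not> P y} = Y - {y\<in>Y. P y}" by blast
  then show ?thesis using card_Diff_subset[of "{y\<in>Y. P y}" Y] assms by auto
qed

lemma finish:
  assumes dx: "distinct xs" "length xs = n" "set xs \<subseteq> X" "card X = n" "finite X"
    and dy: "distinct ys" "length ys = n" "set ys \<subseteq> Y" "card Y = n" "finite Y"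
    and S: "\<forall>i<n. {y\<in>Y. \<not> R (xs!i) y} = (\<lambda>j. ys!j) ` S i"
    and SM: "\<forall>i<n. \<forall>j<n. M i j \<longleftrightarrow> j \<notin> S i"
    and Sn: "\<forall>i<n. S i \<subseteq> {..<n}"
  shows "\<exists>gx gy. bij_betw gx {..<n} X \<and> bij_betw gy {..<n} Y \<and> (\<forall>i<n. \<forall>j<n. R (gx i) (gy j) = M i j)"
proof -
  have sx: "set xs = X" using dx distinct_card[OF dx(1)] by (intro card_subset_eq) auto
  have sy: "set ys = Y" using dy distinct_card[OF dy(1)] by (intro card_subset_eq) auto
  have bx: "bij_betw ((!) xs) {..<n} X" using bij_betw_nth[OF dx(1)] dx(2) sx by simp
  have by': "bij_betw ((!) ys) {..<n} Y" using bij_betw_nth[OF dy(1)] dy(2) sy by simp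
  have "\<forall>i<n. \<forall>j<n. R (xs!i) (ys!j) = M i j"
  proof (intro allI impI)
    fix i j assume i: "i < n" and j: "j < n"
    have yj: "ys!j \<in> Y" using j dy sy by auto
    have "(\<not> R (xs!i) (ys!j)) \<longleftrightarrow> ys!j \<in> (\<lambda>j. ys!j) ` S i" using S i yj by blast
    also have "\<dots> \<longleftrightarrow> j \<in> S i"
    proof
      assume "ys!j \<in> (\<lambda>j. ys!j) ` S i"
      then obtain k where k: "k \<in> S i" "ys!j = ys!k" by blast
      have "k < n" using Sn i k by auto
      then have "j = k" using k j dy nth_eq_iff_index_eq by metis
      then show "j \<in> S i" using k by simp
    qed auto
    finally show "R (xs!i) (ys!j) = M i j" using SM i j by blast
  qed
  then show ?thesis using bx by' by blast
qed

lemma edge_split: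
  assumes sg: "simple_graph V E" and X: "\<forall>e\<in>E. card (e \<inter> X) = 1" and e: "e \<in> E"
  obtains x y where "x \<in> X" "y \<in> V - X" "e = {x,y}"
proof -
  have eV: "e \<subseteq> V" and c2: "card e = 2" using sg e unfolding simple_graph_def by auto
  obtain u w where uw: "e = {u,w}" "u \<noteq> w" using c2 card_2_iff by metis
  have c1: "card (e \<inter> X) = 1" using X e by blast
  show ?thesis
  proof (cases "u \<in> X")
    case True
    have "w \<notin> X"
    proof
      assume "w \<in> X" then have "e \<inter> X = {u,w}" using True uw by auto
      then show False using c1 uw by simp
    qed
    then show ?thesis using that[of u w] True uw eV by auto
  next
    case False
    have "w \<in> X"
    proof (rule ccontr)
      assume "w \<notin> X" then have "e \<inter> X = {}" using False uw by auto
      then show False using c1 by simp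
    qed
    then show ?thesis using that[of w u] False uw eV by (auto simp: insert_commute)
  qed
qed

lemma deg_X:
  assumes sg: "simple_graph V E" and X: "\<forall>e\<in>E. card (e \<inter> X) = 1" and cu: "cubic V E"
    and XV: "X \<subseteq> V" and x: "x \<in> X"
  shows "card {y\<in>V - X. {x,y} \<in> E} = 3"
proof -
  have eq: "{e\<in>E. x\<in>e} = (\<lambda>y. {x,y}) ` {y\<in>V - X. {x,y} \<in> E}"
  proof (rule set_eqI, rule iffI)
    fix e assume "e \<in> {e\<in>E. x\<in>e}"
    then have eE: "e \<in> E" and xe: "x \<in> e" by auto
    obtain a b where ab: "a \<in> X" "b \<in> V - X" "e = {a,b}" by (rule edge_split[OF sg X eE])
    have "x = a" using xe ab x by auto
    then show "e \<in> (\<lambda>y. {x,y}) ` {y\<in>V - X. {x,y} \<in> E}" using ab eE by blast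
  qed auto
  have inj: "inj_on (\<lambda>y. {x,y}) {y\<in>V - X. {x,y} \<in> E}"
    by (rule inj_onI) (use x in \<open>auto simp: doubleton_eq_iff\<close>)
  have "card {e\<in>E. x\<in>e} = 3" using cu x XV unfolding cubic_def by blast
  then show ?thesis unfolding eq using card_image[OF inj] by simp
qed

lemma deg_Y:
  assumes sg: "simple_graph V E" and X: "\<forall>e\<in>E. card (e \<inter> X) = 1" and cu: "cubic V E"
    and XV: "X \<subseteq> V" and y: "y \<in> V - X"
  shows "card {x\<in>X. {x,y} \<in> E} = 3"
proof -
  have eq: "{e\<in>E. y\<in>e} = (\<lambda>x. {x,y}) ` {x\<in>X. {x,y} \<in> E}"
  proof (rule set_eqI, rule iffI)
    fix e assume "e \<in> {e\<in>E. y\<in>e}"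
    then have eE: "e \<in> E" and ye: "y \<in> e" by auto
    obtain a b where ab: "a \<in> X" "b \<in> V - X" "e = {a,b}" by (rule edge_split[OF sg X eE])
    have "y = b" using ye ab y by auto
    then show "e \<in> (\<lambda>x. {x,y}) ` {x\<in>X. {x,y} \<in> E}" using ab eE by blast
  qed auto
  have inj: "inj_on (\<lambda>x. {x,y}) {x\<in>X. {x,y} \<in> E}"
    by (rule inj_onI) (use y in \<open>auto simp: doubleton_eq_iff\<close>)
  have "card {e\<in>E. y\<in>e} = 3" using cu y unfolding cubic_def by blast
  then show ?thesis unfolding eq using card_image[OF inj] by simp
qed

lemma double_count:
  assumes fX: "finite X" and fY: "finite Y"
    and dX: "\<forall>x\<in>X. card {y\<in>Y. R x y} = 3" and dY: "\<forall>y\<in>Y. card {x\<in>X. R x y} = 3"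
  shows "card X = card Y"
proof -
  have "card (SIGMA x:X. {y\<in>Y. R x y}) = (\<Sum>x\<in>X. card {y\<in>Y. R x y})"
    using fX fY by (intro card_SigmaI) auto
  also have "\<dots> = 3 * card X" using dX by simp
  finally have 1: "card (SIGMA x:X. {y\<in>Y. R x y}) = 3 * card X" .
  have "card (SIGMA y:Y. {x\<in>X. R x y}) = (\<Sum>y\<in>Y. card {x\<in>X. R x y})"
    using fX fY by (intro card_SigmaI) auto
  also have "\<dots> = 3 * card Y" using dY by simp
  finally have 2: "card (SIGMA y:Y. {x\<in>X. R x y}) = 3 * card Y" .
  have "(SIGMA y:Y. {x\<in>X. R x y}) = (\<lambda>(x,y). (y,x)) ` (SIGMA x:X. {y\<in>Y. R x y})" by auto
  moreover have "inj_on (\<lambda>(x,y). (y,x)) (SIGMA x:X. {y\<in>Y. R x y})" by (auto simp: inj_on_def)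
  ultimately have "card (SIGMA y:Y. {x\<in>X. R x y}) = card (SIGMA x:X. {y\<in>Y. R x y})"
    by (simp add: card_image)
  then show ?thesis using 1 2 by simp
qed

lemma mk_realizes:
  assumes sg: "simple_graph V E" and X: "\<forall>e\<in>E. card (e \<inter> X) = 1" and XV: "X \<subseteq> V"
    and gx: "bij_betw gx {..<n} X" and gy: "bij_betw gy {..<n} (V - X)"
    and RM: "\<forall>i<n. \<forall>j<n. ({gx i, gy j} \<in> E) = M i j"
  shows "realizes V E n gx gy M"
  unfolding realizes_def
proof (intro conjI)
  show "inj_on gx {..<n}" using bij_betw_imp_inj_on[OF gx] .
  show "inj_on gy {..<n}" using bij_betw_imp_inj_on[OF gy] .
  have ix: "gx ` {..<n} = X" using bij_betw_imp_surj_on[OF gx] .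
  have iy: "gy ` {..<n} = V - X" using bij_betw_imp_surj_on[OF gy] .
  show "gx ` {..<n} \<inter> gy ` {..<n} = {}" unfolding ix iy by blast
  show "V = gx ` {..<n} \<union> gy ` {..<n}" unfolding ix iy using XV by blast
  show "E = {{gx i, gy j} |i j. i < n \<and> j < n \<and> M i j}"
  proof (rule set_eqI, rule iffI)
    fix e assume eE: "e \<in> E"
    obtain x y where xy: "x \<in> X" "y \<in> V - X" "e = {x,y}" by (rule edge_split[OF sg X eE])
    obtain i where i: "i < n" "x = gx i" using xy(1) ix by blast
    obtain j where j: "j < n" "y = gy j" using xy(2) iy by blast
    have "({gx i, gy j} \<in> E) = M i j" using RM i j by simp
    moreover have "{gx i, gy j} \<in> E" using eE xy i j by simp
    ultimately have "M i j" by simp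
    then show "e \<in> {{gx i, gy j} |i j. i < n \<and> j < n \<and> M i j}" using i j xy by blast
  next
    fix e assume "e \<in> {{gx i, gy j} |i j. i < n \<and> j < n \<and> M i j}"
    then obtain i j where ij: "i < n" "j < n" "M i j" "e = {gx i, gy j}" by blast
    have "({gx i, gy j} \<in> E) = M i j" using RM ij by simp
    then show "e \<in> E" using ij by simp
  qed
qed

definition Pf :: "nat \<Rightarrow> complex" where
  "Pf i = [Complex (-3) (-3), Complex 3 3, Complex 1 (-1), Complex (-1) 1] ! i"
definition Qf :: "nat \<Rightarrow> complex" where
  "Qf j = [Complex 1 1, Complex (-1) (-1), Complex (-3) 3, Complex 3 (-3)] ! j"

lemma lp_neq:
  assumes "(1-t)*Re a + t*Re b = (1-s)*Re c + s*Re d \<Longrightarrow> (1-t)*Im a + t*Im b = (1-s)*Im c + s*Im d \<Longrightarrow> False"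
  shows "linepath a b t \<noteq> linepath c d s"
  using assms by (auto simp: linepath_def complex_eq_iff)

lemma all_lt4: "(\<forall>i<(4::nat). P i) \<longleftrightarrow> P 0 \<and> P 1 \<and> P 2 \<and> P 3"
  by (auto simp: less_Suc_eq numeral_eq_Suc)

lemma segs: "\<forall>i<4. \<forall>j<4. \<forall>k<4. \<forall>l<4. i \<noteq> j \<longrightarrow> k \<noteq> l \<longrightarrow> (i \<noteq> k \<or> j \<noteq> l) \<longrightarrow>
   (\<forall>t s. 0 < t \<longrightarrow> t < 1 \<longrightarrow> 0 \<le> s \<longrightarrow> s \<le> 1 \<longrightarrow> linepath (Pf i) (Qf j) t \<noteq> linepath (Pf k) (Qf l) s)"
  unfolding all_lt4 by (intro conjI impI allI; rule lp_neq; simp add: Pf_def Qf_def; linarith)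
lemma lp_neq_pt:
  assumes "(1-t)*Re a + t*Re b = Re c \<Longrightarrow> (1-t)*Im a + t*Im b = Im c \<Longrightarrow> False"
  shows "linepath a b t \<noteq> c"
  using assms by (auto simp: linepath_def complex_eq_iff)

lemma pts_avoid: "\<forall>i<4. \<forall>j<4. \<forall>k<4. i \<noteq> j \<longrightarrow>
   (\<forall>t. 0 < t \<longrightarrow> t < 1 \<longrightarrow> linepath (Pf i) (Qf j) t \<noteq> Pf k \<and> linepath (Pf i) (Qf j) t \<noteq> Qf k)"
  unfolding all_lt4 by (intro conjI impI allI; rule lp_neq_pt; simp add: Pf_def Qf_def; linarith)

lemma pts_dist: "\<forall>i<4. \<forall>k<4. (Pf i = Pf k \<longrightarrow> i = k) \<and> (Qf i = Qf k \<longrightarrow> i = k) \<and> Pf i \<noteq> Qf k"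
  unfolding all_lt4 by (simp add: Pf_def Qf_def complex_eq_iff)

lemma cube_planar:
  assumes r: "realizes V E 4 gx gy (\<lambda>i j. i \<noteq> j)"
  shows "planar V E"
proof -
  define p where "p v = (if v \<in> gx ` {..<4} then Pf (inv_into {..<4} gx v) else Qf (inv_into {..<4} gy v))" for v
  define \<gamma> where "\<gamma> e = linepath (Pf (THE i. i < 4 \<and> gx i \<in> e)) (Qf (THE j. j < 4 \<and> gy j \<in> e))" for e
  have px: "p (gx i) = Pf i" if "i < 4" for i
    using that realizesD(1)[OF r] unfolding p_def by (simp add: inv_into_f_f)
  have py: "p (gy j) = Qf j" if "j < 4" for j
  proof -
    have "gy j \<notin> gx ` {..<4}" using realizesD(3)[OF r] that by blast
    then show ?thesis using that realizesD(2)[OF r] unfolding p_def by (simp add: inv_into_f_f)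
  qed
  have ge: "\<gamma> {gx i, gy j} = linepath (Pf i) (Qf j)" if "i < 4" "j < 4" for i j
    unfolding \<gamma>_def using realizes_idx[OF r that] by simp
  have V: "V = gx ` {..<4} \<union> gy ` {..<4}" using realizesD(4)[OF r] .
  have i1: "p ` gx ` {..<4} = Pf ` {..<4}" unfolding image_image using px by (intro image_cong) auto
  have i2: "p ` gy ` {..<4} = Qf ` {..<4}" unfolding image_image using py by (intro image_cong) auto
  have pV: "p ` V = Pf ` {..<4} \<union> Qf ` {..<4}" unfolding V image_Un i1 i2 ..
  have inj: "inj_on p V"
  proof (rule inj_onI)
    fix u w assume u: "u \<in> V" and w: "w \<in> V" and eq: "p u = p w"
    from u w show "u = w" unfolding V
    proof (elim UnE imageE)
      fix i k assume i: "i \<in> {..<4}" "u = gx i" and k: "k \<in> {..<4}" "w = gx k"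
      then show ?thesis using eq px pts_dist by auto
    next
      fix i k assume i: "i \<in> {..<4}" "u = gx i" and k: "k \<in> {..<4}" "w = gy k"
      then show ?thesis using eq px py pts_dist by auto
    next
      fix i k assume i: "i \<in> {..<4}" "u = gy i" and k: "k \<in> {..<4}" "w = gx k"
      then show ?thesis using eq px py pts_dist by (metis lessThan_iff)
    next
      fix i k assume i: "i \<in> {..<4}" "u = gy i" and k: "k \<in> {..<4}" "w = gy k"
      then show ?thesis using eq py pts_dist by auto
    qed
  qed
  have A: "\<forall>e\<in>E. arc (\<gamma> e) \<and> {pathstart (\<gamma> e), pathfinish (\<gamma> e)} = p ` e"
  proof
    fix e assume "e \<in> E"
    then obtain i j where ij: "i < 4" "j < 4" "i \<noteq> j" "e = {gx i, gy j}" by (rule realizes_edgeE[OF r])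
    have "Pf i \<noteq> Qf j" using pts_dist ij by auto
    then show "arc (\<gamma> e) \<and> {pathstart (\<gamma> e), pathfinish (\<gamma> e)} = p ` e"
      using ge[OF ij(1,2)] px[OF ij(1)] py[OF ij(2)] ij(4) by (simp add: arc_linepath)
  qed
  have B: "\<forall>e\<in>E. \<gamma> e ` {0<..<1} \<inter> p ` V = {}"
  proof
    fix e assume "e \<in> E"
    then obtain i j where ij: "i < 4" "j < 4" "i \<noteq> j" "e = {gx i, gy j}" by (rule realizes_edgeE[OF r])
    show "\<gamma> e ` {0<..<1} \<inter> p ` V = {}"
    proof (rule ccontr)
      assume "\<gamma> e ` {0<..<1} \<inter> p ` V \<noteq> {}"
      then obtain z where z1: "z \<in> \<gamma> e ` {0<..<1}" and z2: "z \<in> p ` V" by blast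
      from z1 obtain t where t: "0 < t" "t < 1" and zt: "z = \<gamma> e t" by auto
      have z: "z = linepath (Pf i) (Qf j) t" "z \<in> p ` V" using zt ge[OF ij(1,2)] ij(4) z2 by auto
      from z(2) obtain k where k: "k < 4" "z = Pf k \<or> z = Qf k" unfolding pV by auto
      then show False using pts_avoid[rule_format, OF ij(1) ij(2) k(1) ij(3) t] z(1) by auto
    qed
  qed
  have C: "\<forall>e\<in>E. \<forall>f\<in>E. e \<noteq> f \<longrightarrow> \<gamma> e ` {0<..<1} \<inter> \<gamma> f ` {0..1} = {}"
  proof (intro ballI impI)
    fix e f assume "e \<in> E" "f \<in> E" "e \<noteq> f"
    obtain i j where ij: "i < 4" "j < 4" "i \<noteq> j" "e = {gx i, gy j}" by (rule realizes_edgeE[OF r \<open>e \<in> E\<close>])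
    obtain k l where kl: "k < 4" "l < 4" "k \<noteq> l" "f = {gx k, gy l}" by (rule realizes_edgeE[OF r \<open>f \<in> E\<close>])
    have ne: "i \<noteq> k \<or> j \<noteq> l" using \<open>e \<noteq> f\<close> ij kl by auto
    show "\<gamma> e ` {0<..<1} \<inter> \<gamma> f ` {0..1} = {}"
    proof (rule ccontr)
      assume "\<gamma> e ` {0<..<1} \<inter> \<gamma> f ` {0..1} \<noteq> {}"
      then obtain z where z1: "z \<in> \<gamma> e ` {0<..<1}" and z2: "z \<in> \<gamma> f ` {0..1}" by blast
      from z1 obtain t where t: "0 < t" "t < 1" and zt: "z = \<gamma> e t" by auto
      from z2 obtain s where s: "0 \<le> s" "s \<le> 1" and zs: "z = \<gamma> f s" by auto
      have eq: "linepath (Pf i) (Qf j) t = linepath (Pf k) (Qf l) s"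
        using zt zs ge[OF ij(1,2)] ge[OF kl(1,2)] ij(4) kl(4) by simp
      then show False using segs[rule_format, OF ij(1,2) kl(1,2) ij(3) kl(3) ne t s] by simp
    qed
  qed
  show ?thesis unfolding planar_def by (intro exI[of _ p] exI[of _ \<gamma>] conjI inj A B C)
qed

lemma full2: "card A = 2 \<Longrightarrow> a \<in> A \<Longrightarrow> b \<in> A \<Longrightarrow> a \<noteq> b \<Longrightarrow> A = {a,b}"
proof -
  assume c: "card A = 2" and ab: "a \<in> A" "b \<in> A" "a \<noteq> b"
  have f: "finite A" using c card.infinite by fastforce
  show "A = {a,b}" using ab c by (intro card_subset_eq[OF f, symmetric]) auto
qed

lemma other2: assumes "card A = 2" "a \<in> A" obtains b where "b \<noteq> a" "A = {a,b}"
proof -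
  obtain u w where uw: "A = {u,w}" "u \<noteq> w" using assms(1) card_2_iff by metis
  show ?thesis
  proof (cases "a = u")
    case True then show ?thesis using that[of w] uw by auto
  next
    case False then have "a = w" using assms(2) uw by auto
    then show ?thesis using that[of u] uw by (auto simp: insert_commute)
  qed
qed

lemma pick2: assumes "card A = 2" obtains a b where "a \<noteq> b" "A = {a,b}"
  using assms card_2_iff by metis

lemma outside: assumes "finite A" "card A < card X" obtains x where "x \<in> X" "x \<notin> A"
proof -
  have "\<not> X \<subseteq> A" using assms card_mono by (metis not_le)
  then show ?thesis using that by blast
qed

lemma M2_S2: "\<forall>i<5. \<forall>j<5. M2 i j \<longleftrightarrow> j \<notin> {[0,0,2,3,4::nat]!i, [1,1,3,4,2::nat]!i}"
  unfolding all_lt5 M2_def by simp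

lemma S2_sub: "\<forall>i<5. {[0,0,2,3,4::nat]!i, [1,1,3,4,2::nat]!i} \<subseteq> {..<5}"
  unfolding all_lt5 by simp

lemma M1_S1: "\<forall>i<5. \<forall>j<5. M1 i j \<longleftrightarrow> j \<notin> {i, (i+1) mod 5}"
  unfolding M1_def by auto

lemma S1_sub: "\<forall>i<5. {i, (i+1) mod 5} \<subseteq> {..<(5::nat)}"
  by auto

lemma lab5_twin:
  assumes fX: "finite X" and fY: "finite Y" and cX: "card X = 5" and cY: "card Y = 5"
    and hx: "\<forall>x\<in>X. card {y\<in>Y. \<not> R x y} = 2" and hy: "\<forall>y\<in>Y. card {x\<in>X. \<not> R x y} = 2"
    and x0: "x0 \<in> X" and x1: "x1 \<in> X" and x01: "x0 \<noteq> x1" and y01: "y0 \<noteq> y1"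
    and m0: "{y\<in>Y. \<not> R x0 y} = {y0,y1}" and m1: "{y\<in>Y. \<not> R x1 y} = {y0,y1}"
  shows "\<exists>gx gy. bij_betw gx {..<5} X \<and> bij_betw gy {..<5} Y \<and> (\<forall>i<5. \<forall>j<5. R (gx i) (gy j) = M2 i j)"
proof -
  define mX where "mX x = {y\<in>Y. \<not> R x y}" for x
  define mY where "mY y = {x\<in>X. \<not> R x y}" for y
  have hx': "\<And>x. x \<in> X \<Longrightarrow> card (mX x) = 2" using hx unfolding mX_def by blast
  have hy': "\<And>y. y \<in> Y \<Longrightarrow> card (mY y) = 2" using hy unfolding mY_def by blast
  have mXY: "\<And>x y. x \<in> X \<Longrightarrow> y \<in> mX x \<longleftrightarrow> y \<in> Y \<and> x \<in> mY y" unfolding mX_def mY_def by auto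
  have mYX: "\<And>x y. y \<in> Y \<Longrightarrow> x \<in> mY y \<longleftrightarrow> x \<in> X \<and> y \<in> mX x" unfolding mX_def mY_def by auto
  have m0': "mX x0 = {y0,y1}" and m1': "mX x1 = {y0,y1}" using m0 m1 unfolding mX_def by auto
  have y0: "y0 \<in> Y" and y1: "y1 \<in> Y" using m0 by auto
  have my0: "mY y0 = {x0,x1}" by (rule full2[OF hy'[OF y0]]) (use mYX[OF y0] x0 x1 m0' m1' x01 in auto)
  have my1: "mY y1 = {x0,x1}" by (rule full2[OF hy'[OF y1]]) (use mYX[OF y1] x0 x1 m0' m1' x01 in auto)
  obtain x2 where x2: "x2 \<in> X" "x2 \<notin> {x0,x1}" by (rule outside[of "{x0,x1}" X]) (use cX card_length[of "[x0,x1]"] in simp_all)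
  obtain y2 y3 where y23: "y2 \<noteq> y3" "mX x2 = {y2,y3}" by (rule pick2[OF hx'[OF x2(1)]])
  have y2: "y2 \<in> Y" "y2 \<notin> {y0,y1}" using mXY[OF x2(1), of y2] y23 my0 my1 x2 by auto
  have y3: "y3 \<in> Y" "y3 \<notin> {y0,y1}" using mXY[OF x2(1), of y3] y23 my0 my1 x2 by auto
  have "x2 \<in> mY y3" using mYX[OF y3(1)] x2 y23 by auto
  then obtain x3 where x3': "x3 \<noteq> x2" "mY y3 = {x2,x3}" using other2 hy'[OF y3(1)] by metis
  have x3X: "x3 \<in> X" using mYX[OF y3(1), of x3] x3' by auto
  have "y3 \<in> mX x3" using mYX[OF y3(1), of x3] x3' by auto
  have x3: "x3 \<notin> {x0,x1}" using \<open>y3 \<in> mX x3\<close> m0' m1' y3 by auto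
  obtain y4 where y4': "y4 \<noteq> y3" "mX x3 = {y3,y4}" using other2[OF hx'[OF x3X] \<open>y3 \<in> mX x3\<close>] by metis
  have y4Y: "y4 \<in> Y" using mXY[OF x3X, of y4] y4' by auto
  have y4: "y4 \<notin> {y0,y1}" using mXY[OF x3X, of y4] y4' my0 my1 x3 by auto
  have y42: "y4 \<noteq> y2"
  proof
    assume eq: "y4 = y2"
    have my2: "mY y2 = {x2,x3}"
      by (rule full2[OF hy'[OF y2(1)]]) (use mYX[OF y2(1)] x2 x3X y23 y4' eq x3' in auto)
    obtain x4 where x4: "x4 \<in> X" "x4 \<notin> {x0,x1,x2,x3}"
      by (rule outside[of "{x0,x1,x2,x3}" X]) (use cX card_length[of "[x0,x1,x2,x3]"] in simp_all)
    have "mX x4 \<subseteq> Y - {y0,y1,y2,y3}"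
    proof
      fix y assume "y \<in> mX x4"
      then have "y \<in> Y" "x4 \<in> mY y" using mXY[OF x4(1)] by auto
      then show "y \<in> Y - {y0,y1,y2,y3}" using my0 my1 my2 x3' x4(2) by auto
    qed
    moreover have "card (Y - {y0,y1,y2,y3}) = 1"
    proof -
      have "card {y0,y1,y2,y3} = 4" using y01 y2 y3 y23 by auto
      then show ?thesis using card_Diff_subset[of "{y0,y1,y2,y3}" Y] y0 y1 y2 y3 cY by simp
    qed
    ultimately have "card (mX x4) \<le> 1" using card_mono fY by (metis finite_Diff)
    then show False using hx'[OF x4(1)] by simp
  qed
  have Yeq: "Y = {y0,y1,y2,y3,y4}"
  proof -
    have "card {y0,y1,y2,y3,y4} = 5" using y01 y2 y3 y4 y23 y4' y42 by auto
    then show ?thesis using y0 y1 y2 y3 y4Y cY fY by (intro card_subset_eq[symmetric]) auto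
  qed
  have "x3 \<in> mY y4" using mYX[OF y4Y] x3X y4' by auto
  then obtain x4 where x4': "x4 \<noteq> x3" "mY y4 = {x3,x4}" using other2 hy'[OF y4Y] by metis
  have x4X: "x4 \<in> X" using mYX[OF y4Y, of x4] x4' by auto
  have "y4 \<in> mX x4" using mYX[OF y4Y, of x4] x4' by auto
  have x4: "x4 \<notin> {x0,x1,x2}" using \<open>y4 \<in> mX x4\<close> m0' m1' y23 y4 y4' y42 by auto
  obtain z where z: "z \<noteq> y4" "mX x4 = {y4,z}" using other2[OF hx'[OF x4X] \<open>y4 \<in> mX x4\<close>] by metis
  have zY: "z \<in> Y" "x4 \<in> mY z" using mXY[OF x4X, of z] z by auto
  have "z \<notin> {y0,y1,y3}" using zY my0 my1 x3' x4 x4' by auto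
  then have z2: "z = y2" using zY Yeq z by auto
  let ?xs = "[x0,x1,x2,x3,x4]" and ?ys = "[y0,y1,y2,y3,y4]"
  have dx: "distinct ?xs" using x01 x2 x3 x3' x4 x4' by auto
  have dy: "distinct ?ys" using y01 y2 y3 y4 y23 y4' y42 by auto
  have S: "\<forall>i<5. {y\<in>Y. \<not> R (?xs!i) y} = (\<lambda>j. ?ys!j) ` {[0,0,2,3,4::nat]!i, [1,1,3,4,2::nat]!i}"
    unfolding all_lt5 mX_def[symmetric] using m0' m1' y23 y4' z z2 by (simp add: insert_commute)
  show ?thesis
    by (rule finish[OF dx _ _ cX fX dy _ _ cY fY S M2_S2 S2_sub])
       (use x0 x1 x2 x3X x4X y0 y1 y2 y3 y4Y in auto)
qed

lemma lab5:
  assumes fX: "finite X" and fY: "finite Y" and cX: "card X = 5" and cY: "card Y = 5"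
    and hx: "\<forall>x\<in>X. card {y\<in>Y. \<not> R x y} = 2" and hy: "\<forall>y\<in>Y. card {x\<in>X. \<not> R x y} = 2"
  shows "(\<exists>gx gy. bij_betw gx {..<5} X \<and> bij_betw gy {..<5} Y \<and> (\<forall>i<5. \<forall>j<5. R (gx i) (gy j) = M1 i j)) \<or>
         (\<exists>gx gy. bij_betw gx {..<5} X \<and> bij_betw gy {..<5} Y \<and> (\<forall>i<5. \<forall>j<5. R (gx i) (gy j) = M2 i j))"
proof -
  define mX where "mX x = {y\<in>Y. \<not> R x y}" for x
  define mY where "mY y = {x\<in>X. \<not> R x y}" for y
  have hx': "\<And>x. x \<in> X \<Longrightarrow> card (mX x) = 2" using hx unfolding mX_def by blast
  have hy': "\<And>y. y \<in> Y \<Longrightarrow> card (mY y) = 2" using hy unfolding mY_def by blast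
  have mXY: "\<And>x y. x \<in> X \<Longrightarrow> y \<in> mX x \<longleftrightarrow> y \<in> Y \<and> x \<in> mY y" unfolding mX_def mY_def by auto
  have mYX: "\<And>x y. y \<in> Y \<Longrightarrow> x \<in> mY y \<longleftrightarrow> x \<in> X \<and> y \<in> mX x" unfolding mX_def mY_def by auto
  have twin: "?thesis" if "x \<in> X" "x' \<in> X" "x \<noteq> x'" "y \<noteq> y'" "mX x = {y,y'}" "mX x' = {y,y'}" for x x' y y'
    using lab5_twin[OF fX fY cX cY hx hy that(1-4)] that(5,6) unfolding mX_def by blast
  obtain x0 where x0: "x0 \<in> X" by (rule outside[of "{}" X]) (use cX in simp_all)
  obtain y0 y1 where y01: "y0 \<noteq> y1" and m0: "mX x0 = {y0,y1}" by (rule pick2[OF hx'[OF x0]])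
  have y0: "y0 \<in> Y" and y1: "y1 \<in> Y" using mXY[OF x0] m0 by auto
  have "x0 \<in> mY y1" using mYX[OF y1] x0 m0 by auto
  then obtain x1 where x1': "x1 \<noteq> x0" "mY y1 = {x0,x1}" using other2 hy'[OF y1] by metis
  have x1: "x1 \<in> X" "y1 \<in> mX x1" using mYX[OF y1, of x1] x1' by auto
  obtain y2 where y2': "y2 \<noteq> y1" "mX x1 = {y1,y2}" using other2[OF hx'[OF x1(1)] x1(2)] by metis
  have y2Y: "y2 \<in> Y" using mXY[OF x1(1), of y2] y2' by auto
  show ?thesis
  proof (cases "y2 = y0")
    case True
    then show ?thesis using twin[OF x0 x1(1) x1'(1)[symmetric] y01 m0] y2' by (simp add: insert_commute)
  next
    case y20: False
    have "x1 \<in> mY y2" using mYX[OF y2Y] x1 y2' by auto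
    then obtain x2 where x2': "x2 \<noteq> x1" "mY y2 = {x1,x2}" using other2 hy'[OF y2Y] by metis
    have x2: "x2 \<in> X" "y2 \<in> mX x2" using mYX[OF y2Y, of x2] x2' by auto
    have x20: "x2 \<noteq> x0" using x2 m0 y20 y2' by auto
    obtain y3 where y3': "y3 \<noteq> y2" "mX x2 = {y2,y3}" using other2[OF hx'[OF x2(1)] x2(2)] by metis
    have y3Y: "y3 \<in> Y" "x2 \<in> mY y3" using mXY[OF x2(1), of y3] y3' by auto
    have y31: "y3 \<noteq> y1" using y3Y x1' x2' x20 by auto
    show ?thesis
    proof (cases "y3 = y0")
      case True
      \<comment> \<open>triangle: the two remaining vertices are twins\<close>
      have my0: "mY y0 = {x0,x2}"
        by (rule full2[OF hy'[OF y0]]) (use mYX[OF y0] x0 x2 m0 y3' True x20 in auto)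
      have cnt: "card {x0,x1,x2} = 3" using x1' x2' x20 by auto
      obtain x3 where x3: "x3 \<in> X" "x3 \<notin> {x0,x1,x2}"
        by (rule outside[of "{x0,x1,x2}" X]) (use cX cnt in simp_all)
      have far: "mX x \<subseteq> Y - {y0,y1,y2}" if "x \<in> X" "x \<notin> {x0,x1,x2}" for x
      proof
        fix y assume "y \<in> mX x"
        then have "y \<in> Y" "x \<in> mY y" using mXY[OF that(1)] by auto
        then show "y \<in> Y - {y0,y1,y2}" using my0 x1' x2' that(2) by auto
      qed
      have cY3: "card (Y - {y0,y1,y2}) = 2"
      proof -
        have "card {y0,y1,y2} = 3" using y01 y20 y2' by auto
        then show ?thesis using card_Diff_subset[of "{y0,y1,y2}" Y] y0 y1 y2Y cY by simp
      qed
      have e3: "mX x3 = Y - {y0,y1,y2}"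
        using far[OF x3] cY3 hx'[OF x3(1)] fY by (intro card_subset_eq) auto
      obtain u w where uw: "u \<noteq> w" "mX x3 = {u,w}" by (rule pick2[OF hx'[OF x3(1)]])
      have uY: "u \<in> Y" "x3 \<in> mY u" using mXY[OF x3(1), of u] uw by auto
      then obtain x4 where x4': "x4 \<noteq> x3" "mY u = {x3,x4}" using other2 hy' by metis
      have x4: "x4 \<in> X" "u \<in> mX x4" using mYX[OF uY(1), of x4] x4' by auto
      have x4o: "x4 \<notin> {x0,x1,x2}" using x4(2) far[OF x3] e3 m0 y2' y3' True uw by auto
      have e4: "mX x4 = Y - {y0,y1,y2}"
        using far[OF x4(1) x4o] cY3 hx'[OF x4(1)] fY by (intro card_subset_eq) auto
      show ?thesis using twin[OF x3(1) x4(1) x4'(1)[symmetric] uw(1)] e3 e4 uw(2) by simp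
    next
      case y30: False
      have "x2 \<in> mY y3" using y3Y by simp
      then obtain x3 where x3': "x3 \<noteq> x2" "mY y3 = {x2,x3}" using other2 hy'[OF y3Y(1)] by metis
      have x3: "x3 \<in> X" "y3 \<in> mX x3" using mYX[OF y3Y(1), of x3] x3' by auto
      have x3o: "x3 \<notin> {x0,x1}" using x3(2) m0 y2' y30 y31 y3' by auto
      obtain y4 where y4': "y4 \<noteq> y3" "mX x3 = {y3,y4}" using other2[OF hx'[OF x3(1)] x3(2)] by metis
      have y4Y: "y4 \<in> Y" "x3 \<in> mY y4" using mXY[OF x3(1), of y4] y4' by auto
      have y42: "y4 \<noteq> y2" using y4Y x2' x3' x3o by auto
      have y41: "y4 \<noteq> y1" using y4Y x1' x3o by auto
      have y40: "y4 \<noteq> y0"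
      proof
        assume eq: "y4 = y0"
        have my0: "mY y0 = {x0,x3}"
          by (rule full2[OF hy'[OF y0]]) (use mYX[OF y0] x0 x3 m0 y4' eq x3o in auto)
        have cnt: "card {x0,x1,x2,x3} = 4" using x1' x2' x20 x3' x3o by auto
        obtain x4 where x4: "x4 \<in> X" "x4 \<notin> {x0,x1,x2,x3}"
          by (rule outside[of "{x0,x1,x2,x3}" X]) (use cX cnt in simp_all)
        have "mX x4 \<subseteq> Y - {y0,y1,y2,y3}"
        proof
          fix y assume "y \<in> mX x4"
          then have "y \<in> Y" "x4 \<in> mY y" using mXY[OF x4(1)] by auto
          then show "y \<in> Y - {y0,y1,y2,y3}" using my0 x1' x2' x3' x4(2) by auto
        qed
        moreover have "card (Y - {y0,y1,y2,y3}) = 1"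
        proof -
          have "card {y0,y1,y2,y3} = 4" using y01 y20 y2' y30 y31 y3' by auto
          then show ?thesis using card_Diff_subset[of "{y0,y1,y2,y3}" Y] y0 y1 y2Y y3Y cY by simp
        qed
        ultimately have "card (mX x4) \<le> 1" using card_mono fY by (metis finite_Diff)
        then show False using hx'[OF x4(1)] by simp
      qed
      have Yeq: "Y = {y0,y1,y2,y3,y4}"
      proof -
        have "card {y0,y1,y2,y3,y4} = 5" using y01 y20 y2' y30 y31 y3' y40 y41 y42 y4' by auto
        then show ?thesis using y0 y1 y2Y y3Y y4Y cY fY by (intro card_subset_eq[symmetric]) auto
      qed
      obtain x4 where x4': "x4 \<noteq> x3" "mY y4 = {x3,x4}" using other2 hy'[OF y4Y(1)] y4Y(2) by metis
      have x4: "x4 \<in> X" "y4 \<in> mX x4" using mYX[OF y4Y(1), of x4] x4' by auto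
      have x4o: "x4 \<notin> {x0,x1,x2}" using x4(2) m0 y2' y3' y40 y41 y42 y4' by auto
      obtain z where z: "z \<noteq> y4" "mX x4 = {y4,z}" using other2[OF hx'[OF x4(1)] x4(2)] by metis
      have zY: "z \<in> Y" "x4 \<in> mY z" using mXY[OF x4(1), of z] z by auto
      have "z \<notin> {y1,y2,y3}" using zY x1' x2' x3' x4o x4' by auto
      then have z0: "z = y0" using zY Yeq z by auto
      let ?xs = "[x0,x1,x2,x3,x4]" and ?ys = "[y0,y1,y2,y3,y4]"
      have dx: "distinct ?xs" using x1' x2' x20 x3' x3o x4' x4o by auto
      have dy: "distinct ?ys" using y01 y20 y2' y30 y31 y3' y40 y41 y42 y4' by auto
      have S: "\<forall>i<5. {y\<in>Y. \<not> R (?xs!i) y} = (\<lambda>j. ?ys!j) ` {i, (i+1) mod 5}"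
        unfolding all_lt5 mX_def[symmetric] using m0 y2' y3' y4' z z0 by (simp add: insert_commute)
      have "\<exists>gx gy. bij_betw gx {..<5} X \<and> bij_betw gy {..<5} Y \<and> (\<forall>i<5. \<forall>j<5. R (gx i) (gy j) = M1 i j)"
        by (rule finish[OF dx _ _ cX fX dy _ _ cY fY S M1_S1 S1_sub])
           (use x0 x1 x2 x3 x4 y0 y1 y2Y y3Y y4Y in auto)
      then show ?thesis by blast
    qed
  qed
qed

lemma lab3:
  assumes fX: "finite X" and fY: "finite Y" and cX: "card X = 3" and cY: "card Y = 3"
    and hx: "\<forall>x\<in>X. card {y\<in>Y. R x y} = 3"
  shows "\<exists>gx gy. bij_betw gx {..<3::nat} X \<and> bij_betw gy {..<3::nat} Y \<and> (\<forall>i<3. \<forall>j<3. R (gx i) (gy j) = (\<lambda>_ _. True) i j)"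
proof -
  obtain xs where xs: "set xs = X" "distinct xs" using finite_distinct_list[OF fX] by blast
  obtain ys where ys: "set ys = Y" "distinct ys" using finite_distinct_list[OF fY] by blast
  have lx: "length xs = 3" using distinct_card[OF xs(2)] xs(1) cX by simp
  have ly: "length ys = 3" using distinct_card[OF ys(2)] ys(1) cY by simp
  have S: "\<forall>i<3. {y\<in>Y. \<not> R (xs!i) y} = (\<lambda>j. ys!j) ` {}"
  proof (intro allI impI)
    fix i assume "i < (3::nat)"
    then have "xs!i \<in> X" using xs lx by auto
    then have "card {y\<in>Y. \<not> R (xs!i) y} = 0" using card_compl_filter[OF fY] hx cY by simp
    then show "{y\<in>Y. \<not> R (xs!i) y} = (\<lambda>j. ys!j) ` {}" using fY by simp
  qed
  show ?thesis
    by (rule finish[OF xs(2) lx _ cX fX ys(2) ly _ cY fY S]) (use xs ys in auto)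
qed

lemma lab4:
  assumes fX: "finite X" and fY: "finite Y" and cX: "card X = 4" and cY: "card Y = 4"
    and hx: "\<forall>x\<in>X. card {y\<in>Y. R x y} = 3" and hy: "\<forall>y\<in>Y. card {x\<in>X. R x y} = 3"
  shows "\<exists>gx gy. bij_betw gx {..<4::nat} X \<and> bij_betw gy {..<4} Y \<and> (\<forall>i<4. \<forall>j<4. R (gx i) (gy j) = (i \<noteq> j))"
proof -
  define m where "m x = (THE y. y \<in> Y \<and> \<not> R x y)" for x
  have mx: "{y\<in>Y. \<not> R x y} = {m x}" if x: "x \<in> X" for x
  proof -
    have "card {y\<in>Y. \<not> R x y} = 1" using card_compl_filter[OF fY] hx cY x by simp
    then obtain a where a: "{y\<in>Y. \<not> R x y} = {a}" using card_1_singletonE by blast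
    have "m x = a" unfolding m_def
    proof (rule the_equality)
      show "a \<in> Y \<and> \<not> R x a" using a by blast
      fix y assume "y \<in> Y \<and> \<not> R x y" then show "y = a" using a by blast
    qed
    then show ?thesis using a by simp
  qed
  have my: "card {x\<in>X. \<not> R x y} = 1" if y: "y \<in> Y" for y
    using card_compl_filter[OF fX] hy cX y by simp
  obtain xs where xs: "set xs = X" "distinct xs" using finite_distinct_list[OF fX] by blast
  have lx: "length xs = 4" using distinct_card[OF xs(2)] xs(1) cX by simp
  define ys where "ys = map m xs"
  have ly: "length ys = 4" using lx unfolding ys_def by simp
  have mY: "m x \<in> Y" "\<not> R x (m x)" if "x \<in> X" for x using mx[OF that] by auto
  have inj: "inj_on m X"
  proof (rule inj_onI)
    fix x x' assume x: "x \<in> X" and x': "x' \<in> X" and eq: "m x = m x'"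
    show "x = x'"
    proof (rule ccontr)
      assume ne: "x \<noteq> x'"
      have "{x,x'} \<subseteq> {z\<in>X. \<not> R z (m x)}" using mY[OF x] mY[OF x'] x x' eq by auto
      then have "card {x,x'} \<le> card {z\<in>X. \<not> R z (m x)}" using fX by (intro card_mono) auto
      then show False using my[OF mY(1)[OF x]] ne by simp
    qed
  qed
  have dy: "distinct ys" unfolding ys_def using xs inj by (simp add: distinct_map)
  have sy: "set ys \<subseteq> Y" unfolding ys_def using xs mY by auto
  have S: "\<forall>i<4. {y\<in>Y. \<not> R (xs!i) y} = (\<lambda>j. ys!j) ` {i}"
  proof (intro allI impI)
    fix i assume i: "i < (4::nat)"
    then have "xs!i \<in> X" using xs lx by auto
    then show "{y\<in>Y. \<not> R (xs!i) y} = (\<lambda>j. ys!j) ` {i}" using mx i lx unfolding ys_def by simp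
  qed
  show ?thesis
    by (rule finish[OF xs(2) lx _ cX fX dy ly sy cY fY S]) (use xs in auto)
qed

theorem lemma16:
  fixes V :: "'a set" and E :: "'a set set"
  assumes "simple_graph V E" and "bipartite V E" and "\<not> planar V E"
      and "cubic V E" and "card V \<le> 10"
  shows "edge_kempe_classes3 E > 1"
proof -
  note sg = assms(1) and np = assms(3) and cu = assms(4)
  obtain X where XV: "X \<subseteq> V" and Xe: "\<forall>e\<in>E. card (e \<inter> X) = 1"
    using assms(2) unfolding bipartite_def by blast
  define Y where "Y = V - X"
  have fV: "finite V" using sg unfolding simple_graph_def by blast
  have fX: "finite X" using fV XV finite_subset by blast
  have fY: "finite Y" using fV unfolding Y_def by simp
  have hx: "\<forall>x\<in>X. card {y\<in>Y. {x,y} \<in> E} = 3" using deg_X[OF sg Xe cu XV] unfolding Y_def by blast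
  have hy: "\<forall>y\<in>Y. card {x\<in>X. {x,y} \<in> E} = 3" using deg_Y[OF sg Xe cu XV] unfolding Y_def by blast
  have cXY: "card X = card Y" by (rule double_count[OF fX fY hx hy])
  have cV: "card V = card X + card Y"
  proof -
    have "V = X \<union> Y" using XV unfolding Y_def by blast
    then show ?thesis using card_Un_disjoint[OF fX fY] unfolding Y_def by auto
  qed
  define n where "n = card X"
  have cY: "card Y = n" using cXY n_def by simp
  have n5: "n \<le> 5" using cV assms(5) cXY n_def by simp
  have hx5: "\<forall>x\<in>X. card {y\<in>Y. \<not> {x,y} \<in> E} = card Y - 3" using hx card_compl_filter[OF fY] by simp
  have hy5: "\<forall>y\<in>Y. card {x\<in>X. \<not> {x,y} \<in> E} = card X - 3" using hy card_compl_filter[OF fX] by simp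
  have YVX: "Y = V - X" unfolding Y_def ..
  show ?thesis
  proof (cases "X = {}")
    case True
    then have "Y = {}" using cXY fY by simp
    then have V0: "V = {}" using True XV unfolding Y_def by blast
    have E0: "E = {}"
    proof (rule ccontr)
      assume "E \<noteq> {}" then obtain e where "e \<in> E" by blast
      then have "e \<subseteq> V" "card e = 2" using sg unfolding simple_graph_def by auto
      then show False using V0 by simp
    qed
    have "planar V E" unfolding planar_def V0 E0 by simp
    then show ?thesis using np by simp
  next
    case False
    then obtain x where x: "x \<in> X" by blast
    have "3 \<le> card Y" using hx x card_mono[OF fY, of "{y\<in>Y. {x,y} \<in> E}"] by auto
    then have n3: "3 \<le> n" using cY by simp
    have "n = 3 \<or> n = 4 \<or> n = 5" using n3 n5 by auto
    then show ?thesis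
    proof (elim disjE)
      assume n: "n = 3"
      have c3: "card X = 3" "card Y = 3" using n n_def cY by auto
      obtain gx gy where g: "bij_betw gx {..<3::nat} X" "bij_betw gy {..<3::nat} Y"
        "\<forall>i<3. \<forall>j<3. ({gx i, gy j} \<in> E) = (\<lambda>_ _. True) i j"
        using lab3[OF fX fY c3 hx] by blast
      have r: "realizes V E 3 gx gy (\<lambda>_ _. True)"
        by (rule mk_realizes[OF sg Xe XV g(1) g(2)[unfolded YVX] g(3)])
      show ?thesis by (rule realize_two[OF sg cu r K33_ok1 K33_ok2 K33_odd])
    next
      assume n: "n = 4"
      have c4: "card X = 4" "card Y = 4" using n n_def cY by auto
      obtain gx gy where g: "bij_betw gx {..<4::nat} X" "bij_betw gy {..<4::nat} Y"
        "\<forall>i<4. \<forall>j<4. ({gx i, gy j} \<in> E) = (i \<noteq> j)"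
        using lab4[OF fX fY c4 hx hy] by blast
      have r: "realizes V E 4 gx gy (\<lambda>i j. i \<noteq> j)"
        by (rule mk_realizes[OF sg Xe XV g(1) g(2)[unfolded YVX]]) (use g(3) in simp)
      then show ?thesis using cube_planar np by blast
    next
      assume n: "n = 5"
      have hx2: "\<forall>x\<in>X. card {y\<in>Y. \<not> {x,y} \<in> E} = 2" using hx5 cY n by simp
      have hy2: "\<forall>y\<in>Y. card {x\<in>X. \<not> {x,y} \<in> E} = 2" using hy5 n n_def by simp
      have c5: "card X = 5" "card Y = 5" using n n_def cY by auto
      from lab5[OF fX fY c5 hx2 hy2] show ?thesis
      proof (elim disjE exE conjE)
        fix gx gy assume g: "bij_betw gx {..<5::nat} X" "bij_betw gy {..<5::nat} Y"
          "\<forall>i<5. \<forall>j<5. ({gx i, gy j} \<in> E) = M1 i j"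
        have r: "realizes V E 5 gx gy M1"
          by (rule mk_realizes[OF sg Xe XV g(1) g(2)[unfolded YVX] g(3)])
        show ?thesis by (rule realize_two[OF sg cu r G1_ok1 G1_ok2 G1_odd])
      next
        fix gx gy assume g: "bij_betw gx {..<5::nat} X" "bij_betw gy {..<5::nat} Y"
          "\<forall>i<5. \<forall>j<5. ({gx i, gy j} \<in> E) = M2 i j"
        have r: "realizes V E 5 gx gy M2"
          by (rule mk_realizes[OF sg Xe XV g(1) g(2)[unfolded YVX] g(3)])
        show ?thesis by (rule realize_two[OF sg cu r G2_ok1 G2_ok2 G2_odd])
      qed
    qed
  qed
qed

end
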